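(* Let $G$ be a finite simple graph and $vw$ an edge of $G$. Then $vw$ is exposed in $G$ if and only if $N_G(v)\cap N_G(w)$ is nonempty and induces a clique (complete subgraph) in $G$.
   Context: All graphs are finite, undirected, simple. $N_G(v)=\{w : vw\in E(G)\}$ is the open neighborhood. A facet edge of $G$ is an edge $xy$ such that $\{x,y\}$ is a maximal clique of $G$. An edge of $G$ is exposed if it is contained in a unique maximal clique of $G$ and it is not a facet edge. *)

theory Defs
  imports Main
begin

definition simple_graph :: "'a set \<Rightarrow> ('a \<Rightarrow> 'a \<Rightarrow> bool) \<Rightarrow> bool" where
  "simple_graph V E \<longleftrightarrow> finite V \<and> (\<forall>x y. E x y \<longrightarrow> x \<in> V \<and> y \<in> V)
     \<and> (\<forall>x y. E x y \<longrightarrow> E y x) \<and> (\<forall>x. \<not> E x x)"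

definition nbhd :: "'a set \<Rightarrow> ('a \<Rightarrow> 'a \<Rightarrow> bool) \<Rightarrow> 'a \<Rightarrow> 'a set" where
  "nbhd V E v = {w \<in> V. E v w}"

definition is_clique :: "'a set \<Rightarrow> ('a \<Rightarrow> 'a \<Rightarrow> bool) \<Rightarrow> 'a set \<Rightarrow> bool" where
  "is_clique V E K \<longleftrightarrow> K \<subseteq> V \<and> (\<forall>x\<in>K. \<forall>y\<in>K. x \<noteq> y \<longrightarrow> E x y)"

definition max_clique :: "'a set \<Rightarrow> ('a \<Rightarrow> 'a \<Rightarrow> bool) \<Rightarrow> 'a set \<Rightarrow> bool" where
  "max_clique V E K \<longleftrightarrow> is_clique V E K \<and> (\<forall>K'. is_clique V E K' \<and> K \<subseteq> K' \<longrightarrow> K' = K)"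

definition facet_edge :: "'a set \<Rightarrow> ('a \<Rightarrow> 'a \<Rightarrow> bool) \<Rightarrow> 'a \<Rightarrow> 'a \<Rightarrow> bool" where
  "facet_edge V E x y \<longleftrightarrow> E x y \<and> max_clique V E {x, y}"

definition exposed_edge :: "'a set \<Rightarrow> ('a \<Rightarrow> 'a \<Rightarrow> bool) \<Rightarrow> 'a \<Rightarrow> 'a \<Rightarrow> bool" where
  "exposed_edge V E x y \<longleftrightarrow> E x y \<and> (\<exists>!K. max_clique V E K \<and> {x, y} \<subseteq> K)
     \<and> \<not> facet_edge V E x y"

end

theory Submission
  imports Defs
begin

lemma ext_clique:
  assumes g: "simple_graph V E" and S: "is_clique V E S"
  shows "\<exists>K. max_clique V E K \<and> S \<subseteq> K"
proof -
  let ?F = "{K. is_clique V E K \<and> S \<subseteq> K}"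
  have "?F \<subseteq> Pow V" by (auto simp: is_clique_def)
  moreover have "finite V" using g by (simp add: simple_graph_def)
  ultimately have fin: "finite ?F" by (meson finite_Pow_iff finite_subset)
  have ne: "?F \<noteq> {}" using S by blast
  obtain m where m: "m \<in> ?F" "\<forall>b\<in>?F. m \<le> b \<longrightarrow> m = b"
    using finite_has_maximal[OF fin ne] by blast
  have "max_clique V E m" unfolding max_clique_def using m by auto
  thus ?thesis using m by blast
qed

theorem lemma2p7:
  fixes V :: "'a set" and E :: "'a \<Rightarrow> 'a \<Rightarrow> bool" and v w :: 'a
  assumes "simple_graph V E" and "E v w"
  shows "exposed_edge V E v w \<longleftrightarrow>
           (nbhd V E v \<inter> nbhd V E w \<noteq> {} \<and> is_clique V E (nbhd V E v \<inter> nbhd V E w))"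
proof -
  have sym: "\<And>x y. E x y \<Longrightarrow> E y x" and irr: "\<And>x. \<not> E x x"
    and inV: "\<And>x y. E x y \<Longrightarrow> x \<in> V \<and> y \<in> V"
    using assms(1) by (auto simp: simple_graph_def)
  let ?C = "nbhd V E v \<inter> nbhd V E w"
  have vw: "v \<noteq> w" using assms(2) irr by auto
  have Csub: "\<And>K. is_clique V E K \<Longrightarrow> {v,w} \<subseteq> K \<Longrightarrow> K \<subseteq> {v,w} \<union> ?C"
    by (auto simp: is_clique_def nbhd_def)
  have vwcl: "is_clique V E {v,w}" using assms(2) sym inV by (auto simp: is_clique_def)
  show ?thesis
  proof
    assume ex: "exposed_edge V E v w"
    have e1: "\<exists>!K. max_clique V E K \<and> {v,w} \<subseteq> K" and nf: "\<not> facet_edge V E v w"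
      using ex unfolding exposed_edge_def by simp_all
    from e1 obtain K where K0: "max_clique V E K \<and> {v,w} \<subseteq> K"
      and uniq0: "\<forall>K'. max_clique V E K' \<and> {v,w} \<subseteq> K' \<longrightarrow> K' = K"
      by (rule ex1E) blast+
    have K: "max_clique V E K" "{v,w} \<subseteq> K" using K0 by simp_all
    have uniq: "\<And>K'. max_clique V E K' \<Longrightarrow> {v,w} \<subseteq> K' \<Longrightarrow> K' = K"
      using uniq0 by blast
    have ne: "?C \<noteq> {}"
    proof
      assume e: "?C = {}"
      have "max_clique V E {v,w}" unfolding max_clique_def
      proof (intro conjI allI impI)
        fix K' assume "is_clique V E K' \<and> {v,w} \<subseteq> K'"
        with Csub[of K'] e show "K' = {v,w}" by auto
      qed (rule vwcl)
      thus False using nf assms(2) by (simp add: facet_edge_def)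
    qed
    have "is_clique V E ?C" unfolding is_clique_def
    proof (intro conjI ballI impI)
      show "?C \<subseteq> V" by (auto simp: nbhd_def)
    next
      fix x y assume x: "x \<in> ?C" and y: "y \<in> ?C" and xy: "x \<noteq> y"
      have cx: "is_clique V E {v,w,x}" using x vwcl sym by (auto simp: is_clique_def nbhd_def)
      have cy: "is_clique V E {v,w,y}" using y vwcl sym by (auto simp: is_clique_def nbhd_def)
      obtain K1 where "max_clique V E K1" "{v,w,x} \<subseteq> K1" using ext_clique[OF assms(1) cx] by blast
      with uniq have "x \<in> K" by blast
      obtain K2 where "max_clique V E K2" "{v,w,y} \<subseteq> K2" using ext_clique[OF assms(1) cy] by blast
      with uniq have "y \<in> K" by blast
      show "E x y" using \<open>x \<in> K\<close> \<open>y \<in> K\<close> xy K(1) by (auto simp: max_clique_def is_clique_def)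
    qed
    thus "?C \<noteq> {} \<and> is_clique V E ?C" using ne by blast
  next
    assume h: "?C \<noteq> {} \<and> is_clique V E ?C"
    let ?K = "{v,w} \<union> ?C"
    have hc: "\<And>x y. x \<in> ?C \<Longrightarrow> y \<in> ?C \<Longrightarrow> x \<noteq> y \<Longrightarrow> E x y"
      using h unfolding is_clique_def by blast
    have cK: "is_clique V E ?K" unfolding is_clique_def
    proof (intro conjI ballI impI)
      show "?K \<subseteq> V" using vwcl by (auto simp: is_clique_def nbhd_def)
    next
      fix x y assume x: "x \<in> ?K" and y: "y \<in> ?K" and xy: "x \<noteq> y"
      show "E x y"
      proof (cases "x \<in> ?C")
        case True
        show ?thesis
        proof (cases "y \<in> ?C")
          case True with \<open>x \<in> ?C\<close> xy hc show ?thesis by blast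
        next
          case False
          hence "y = v \<or> y = w" using y by blast
          thus ?thesis using \<open>x \<in> ?C\<close> sym by (auto simp: nbhd_def)
        qed
      next
        case False
        hence xv: "x = v \<or> x = w" using x by blast
        show ?thesis
        proof (cases "y \<in> ?C")
          case True thus ?thesis using xv by (auto simp: nbhd_def)
        next
          case False
          hence "y = v \<or> y = w" using y by blast
          thus ?thesis using xv xy assms(2) sym by blast
        qed
      qed
    qed
    have mK: "max_clique V E ?K" unfolding max_clique_def
    proof (intro conjI allI impI)
      fix K' assume a: "is_clique V E K' \<and> ?K \<subseteq> K'"
      hence "K' \<subseteq> ?K" using Csub[of K'] by blast
      with a show "K' = ?K" by blast
    qed (rule cK)
    have u: "\<exists>!K. max_clique V E K \<and> {v,w} \<subseteq> K"
    proof (rule ex1I[of _ ?K])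
      show "max_clique V E ?K \<and> {v,w} \<subseteq> ?K" using mK by blast
    next
      fix K assume "max_clique V E K \<and> {v,w} \<subseteq> K"
      then have "K \<subseteq> ?K" "max_clique V E K" using Csub by (auto simp: max_clique_def)
      thus "K = ?K" using cK by (auto simp: max_clique_def)
    qed
    obtain c where c: "c \<in> ?C" using h by blast
    have "c \<noteq> v" "c \<noteq> w" using c irr by (auto simp: nbhd_def)
    have "c \<in> ?K" "c \<notin> {v,w}" using c \<open>c \<noteq> v\<close> \<open>c \<noteq> w\<close> by auto
    hence "?K \<noteq> {v,w}" by blast
    hence "\<not> max_clique V E {v,w}" using cK unfolding max_clique_def by blast
    thus "exposed_edge V E v w" using u assms(2) by (simp add: exposed_edge_def facet_edge_def)
  qed
qed

end
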